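(* Let $G=(U,V,E)$ be a finite bipartite graph, $F\subseteq E$, and let $(E_r,E_b)$ be an $(A,C)$-free bipartition of the set $E_c$ of committed edges of $G$. Fix a non-edge $uv\in\hat{E}$ with $u\in U$, $v\in V$, and define $H_r=\{u'v'\in E_r : uv'\in E_b,\ u'v\in E_b\}$, $H_b=\{u'v'\in E_b : uv'\in E_r,\ u'v\in E_r\}$ (where $u'\in U$, $v'\in V$), $H=H_r\cup H_b$, and $E_r'=(E_r\setminus H_r)\cup H_b$, $E_b'=(E_b\setminus H_b)\cup H_r$. Then no edge in $H$ is an edge of any forbidden configuration $(A_1)$, $(A_2)$, $(B_1)$, $(B_2)$ or $(C)$ of the pair $(E_r',E_b')$.
   Context: $\hat{E}=\{xy: x\in U,\ y\in V,\ xy\notin E\}$. Two edges $u_1v_1,u_2v_2\in E$ ($u_i\in U$, $v_i\in V$) are in conflict in $G$ if $u_1v_2\notin E$ and $u_2v_1\notin E$. An edge is committed if it is in conflict with some other edge of $E$; $E_c$ is the set of committed edges. A bipartition of $E_c$ is a pair $(R,B)$ with $R\cap B=\emptyset$, $R\cup B=E_c$, $F\cap E_c\subseteq B$. For a pair $(R,B)$ of disjoint subsets of $E_c$, the forbidden configurations on vertices $u_1,u_2\in U$, $v_1,v_2\in V$ are: $(A_1)$: $u_1v_1,u_2v_2\in R$, $u_1v_2,u_2v_1\in\hat{E}$; $(A_2)$: $u_1v_1,u_2v_2\in B$, $u_1v_2,u_2v_1\in\hat{E}$; $(B_1)$: $u_1v_1,u_2v_2\in R$, $u_1v_2\in\hat{E}$,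 $u_2v_1\in B$; $(B_2)$: $u_1v_1,u_2v_2\in B$, $u_1v_2\in\hat{E}$, $u_2v_1\in R$; $(C)$: $u_1v_1,u_2v_2\in R$, $u_1v_2\in\hat{E}$, $u_2v_1\in F$. The edges of a configuration are its members of $E$ (i.e. $u_1v_1,u_2v_2$, and $u_2v_1$ when it lies in $E$). $(R,B)$ is $(A,C)$-free if it has no configuration $(A_1)$, $(A_2)$ or $(C)$. *)

theory Defs
  imports Main
begin

definition bipartite_graph :: "'a set \<Rightarrow> 'a set \<Rightarrow> ('a \<times> 'a) set \<Rightarrow> bool" where
  "bipartite_graph U V E \<longleftrightarrow> finite U \<and> finite V \<and> U \<inter> V = {} \<and> E \<subseteq> U \<times> V"

definition non_edges :: "'a set \<Rightarrow> 'a set \<Rightarrow> ('a \<times> 'a) set \<Rightarrow> ('a \<times> 'a) set" where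
  "non_edges U V E = {(x, y). x \<in> U \<and> y \<in> V \<and> (x, y) \<notin> E}"

definition in_conflict :: "('a \<times> 'a) set \<Rightarrow> 'a \<times> 'a \<Rightarrow> 'a \<times> 'a \<Rightarrow> bool" where
  "in_conflict E e1 e2 \<longleftrightarrow> e1 \<in> E \<and> e2 \<in> E \<and>
     (fst e1, snd e2) \<notin> E \<and> (fst e2, snd e1) \<notin> E"

definition committed :: "('a \<times> 'a) set \<Rightarrow> ('a \<times> 'a) set" where
  "committed E = {e \<in> E. \<exists>e' \<in> E. e' \<noteq> e \<and> in_conflict E e e'}"

definition bipartition :: "('a \<times> 'a) set \<Rightarrow> ('a \<times> 'a) set \<Rightarrow> ('a \<times> 'a) set \<Rightarrow> ('a \<times> 'a) set \<Rightarrow> bool" where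
  "bipartition E F R B \<longleftrightarrow> R \<inter> B = {} \<and> R \<union> B = committed E \<and> F \<inter> committed E \<subseteq> B"

definition config_A1 :: "'a set \<Rightarrow> 'a set \<Rightarrow> ('a \<times> 'a) set \<Rightarrow> ('a \<times> 'a) set \<Rightarrow> ('a \<times> 'a) set \<Rightarrow> 'a \<Rightarrow> 'a \<Rightarrow> 'a \<Rightarrow> 'a \<Rightarrow> bool" where
  "config_A1 U V E R B u1 u2 v1 v2 \<longleftrightarrow> u1 \<in> U \<and> u2 \<in> U \<and> v1 \<in> V \<and> v2 \<in> V \<and>
     (u1, v1) \<in> R \<and> (u2, v2) \<in> R \<and> (u1, v2) \<in> non_edges U V E \<and> (u2, v1) \<in> non_edges U V E"

definition config_A2 :: "'a set \<Rightarrow> 'a set \<Rightarrow> ('a \<times> 'a) set \<Rightarrow> ('a \<times> 'a) set \<Rightarrow> ('a \<times> 'a) set \<Rightarrow> 'a \<Rightarrow> 'a \<Rightarrow> 'a \<Rightarrow> 'a \<Rightarrow> bool" where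
  "config_A2 U V E R B u1 u2 v1 v2 \<longleftrightarrow> u1 \<in> U \<and> u2 \<in> U \<and> v1 \<in> V \<and> v2 \<in> V \<and>
     (u1, v1) \<in> B \<and> (u2, v2) \<in> B \<and> (u1, v2) \<in> non_edges U V E \<and> (u2, v1) \<in> non_edges U V E"

definition config_B1 :: "'a set \<Rightarrow> 'a set \<Rightarrow> ('a \<times> 'a) set \<Rightarrow> ('a \<times> 'a) set \<Rightarrow> ('a \<times> 'a) set \<Rightarrow> 'a \<Rightarrow> 'a \<Rightarrow> 'a \<Rightarrow> 'a \<Rightarrow> bool" where
  "config_B1 U V E R B u1 u2 v1 v2 \<longleftrightarrow> u1 \<in> U \<and> u2 \<in> U \<and> v1 \<in> V \<and> v2 \<in> V \<and>
     (u1, v1) \<in> R \<and> (u2, v2) \<in> R \<and> (u1, v2) \<in> non_edges U V E \<and> (u2, v1) \<in> B"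

definition config_B2 :: "'a set \<Rightarrow> 'a set \<Rightarrow> ('a \<times> 'a) set \<Rightarrow> ('a \<times> 'a) set \<Rightarrow> ('a \<times> 'a) set \<Rightarrow> 'a \<Rightarrow> 'a \<Rightarrow> 'a \<Rightarrow> 'a \<Rightarrow> bool" where
  "config_B2 U V E R B u1 u2 v1 v2 \<longleftrightarrow> u1 \<in> U \<and> u2 \<in> U \<and> v1 \<in> V \<and> v2 \<in> V \<and>
     (u1, v1) \<in> B \<and> (u2, v2) \<in> B \<and> (u1, v2) \<in> non_edges U V E \<and> (u2, v1) \<in> R"

definition config_C :: "'a set \<Rightarrow> 'a set \<Rightarrow> ('a \<times> 'a) set \<Rightarrow> ('a \<times> 'a) set \<Rightarrow> ('a \<times> 'a) set \<Rightarrow> ('a \<times> 'a) set \<Rightarrow> 'a \<Rightarrow> 'a \<Rightarrow> 'a \<Rightarrow> 'a \<Rightarrow> bool" where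
  "config_C U V E F R B u1 u2 v1 v2 \<longleftrightarrow> u1 \<in> U \<and> u2 \<in> U \<and> v1 \<in> V \<and> v2 \<in> V \<and>
     (u1, v1) \<in> R \<and> (u2, v2) \<in> R \<and> (u1, v2) \<in> non_edges U V E \<and> (u2, v1) \<in> F"

definition forbidden_config where
  "forbidden_config U V E F R B u1 u2 v1 v2 \<longleftrightarrow>
     config_A1 U V E R B u1 u2 v1 v2 \<or> config_A2 U V E R B u1 u2 v1 v2 \<or>
     config_B1 U V E R B u1 u2 v1 v2 \<or> config_B2 U V E R B u1 u2 v1 v2 \<or>
     config_C U V E F R B u1 u2 v1 v2"

definition config_edges :: "('a \<times> 'a) set \<Rightarrow> 'a \<Rightarrow> 'a \<Rightarrow> 'a \<Rightarrow> 'a \<Rightarrow> ('a \<times> 'a) set" where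
  "config_edges E u1 u2 v1 v2 = {(u1, v1), (u2, v2), (u2, v1)} \<inter> E"

definition AC_free where
  "AC_free U V E F R B \<longleftrightarrow> (\<forall>u1 u2 v1 v2.
     \<not> config_A1 U V E R B u1 u2 v1 v2 \<and> \<not> config_A2 U V E R B u1 u2 v1 v2 \<and>
     \<not> config_C U V E F R B u1 u2 v1 v2)"

end

theory Submission
  imports Defs
begin

locale L2 =
  fixes U V :: "'a set" and E F R B Hr Hb R2 B2 :: "('a \<times> 'a) set" and u v :: 'a
  assumes EUV: "E \<subseteq> U \<times> V"
    and FE: "F \<subseteq> E"
    and bip: "bipartition E F R B"
    and acf: "AC_free U V E F R B"
    and uv: "(u, v) \<in> non_edges U V E"
    and Hr_def: "Hr = {(u', v'). (u', v') \<in> R \<and> (u, v') \<in> B \<and> (u', v) \<in> B}"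
    and Hb_def: "Hb = {(u', v'). (u', v') \<in> B \<and> (u, v') \<in> R \<and> (u', v) \<in> R}"
    and R2_def: "R2 = (R - Hr) \<union> Hb"
    and B2_def: "B2 = (B - Hb) \<union> Hr"
begin

abbreviation "N \<equiv> non_edges U V E"

lemma Nd: "p \<in> N \<Longrightarrow> p \<notin> E"
  by (auto simp: non_edges_def)

lemma NI: "x \<in> U \<Longrightarrow> y \<in> V \<Longrightarrow> (x, y) \<notin> E \<Longrightarrow> (x, y) \<in> N"
  by (auto simp: non_edges_def)

lemma EU: "(x, y) \<in> E \<Longrightarrow> x \<in> U" and EV: "(x, y) \<in> E \<Longrightarrow> y \<in> V"
  using EUV by auto

lemma RB_comm: "R \<union> B = committed E" "R \<inter> B = {}" "F \<inter> committed E \<subseteq> B"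
  using bip by (auto simp: bipartition_def)

lemma RE: "p \<in> R \<Longrightarrow> p \<in> E" and BE: "p \<in> B \<Longrightarrow> p \<in> E"
  using RB_comm(1) by (auto simp: committed_def)

lemma disj: "p \<in> R \<Longrightarrow> p \<in> B \<Longrightarrow> False"
  using RB_comm(2) by auto

lemma FR: "p \<in> F \<Longrightarrow> p \<in> R \<Longrightarrow> False"
  using RB_comm disj by blast

lemma CF: "(a, b) \<in> E \<Longrightarrow> (c, d) \<in> E \<Longrightarrow> (a, d) \<in> N \<Longrightarrow> (c, b) \<in> N \<Longrightarrow> (a, b) \<in> R \<or> (a, b) \<in> B"
proof -
  assume h: "(a, b) \<in> E" "(c, d) \<in> E" "(a, d) \<in> N" "(c, b) \<in> N"
  have "(c, d) \<noteq> (a, b)" using h Nd by auto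
  then have "(a, b) \<in> committed E" using h Nd unfolding committed_def in_conflict_def by fastforce
  then show ?thesis using RB_comm(1) by auto
qed

lemma W: assumes "(a, b) \<in> R \<or> (a, b) \<in> B"
  obtains x y where "(x, y) \<in> E" "(a, y) \<in> N" "(x, b) \<in> N"
proof -
  have "(a, b) \<in> committed E" using assms RB_comm(1) by auto
  then obtain e' where e': "e' \<in> E" "in_conflict E (a, b) e'" unfolding committed_def by auto
  obtain x y where "e' = (x, y)" by (cases e')
  then show ?thesis using e' that NI EU EV unfolding in_conflict_def by (metis fst_conv snd_conv)
qed

lemma A1: "(u1, v1) \<in> R \<Longrightarrow> (u2, v2) \<in> R \<Longrightarrow> (u1, v2) \<in> N \<Longrightarrow> (u2, v1) \<in> N \<Longrightarrow> False"
  using acf RE EU EV unfolding AC_free_def config_A1_def by blast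

lemma A2: "(u1, v1) \<in> B \<Longrightarrow> (u2, v2) \<in> B \<Longrightarrow> (u1, v2) \<in> N \<Longrightarrow> (u2, v1) \<in> N \<Longrightarrow> False"
  using acf BE EU EV unfolding AC_free_def config_A2_def by blast

lemma CC: "(u1, v1) \<in> R \<Longrightarrow> (u2, v2) \<in> R \<Longrightarrow> (u1, v2) \<in> N \<Longrightarrow> (u2, v1) \<in> F \<Longrightarrow> False"
  using acf RE EU EV unfolding AC_free_def config_C_def by blast

lemma Hr_iff: "(x, y) \<in> Hr \<longleftrightarrow> (x, y) \<in> R \<and> (u, y) \<in> B \<and> (x, v) \<in> B"
  by (simp add: Hr_def)
lemma Hb_iff: "(x, y) \<in> Hb \<longleftrightarrow> (x, y) \<in> B \<and> (u, y) \<in> R \<and> (x, v) \<in> R"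
  by (simp add: Hb_def)
lemma R2_iff: "p \<in> R2 \<longleftrightarrow> (p \<in> R \<and> p \<notin> Hr) \<or> p \<in> Hb"
  by (auto simp: R2_def)
lemma B2_iff: "p \<in> B2 \<longleftrightarrow> (p \<in> B \<and> p \<notin> Hb) \<or> p \<in> Hr"
  by (auto simp: B2_def)


lemma NUV: "(x, y) \<in> N \<Longrightarrow> x \<in> U \<and> y \<in> V"
  by (auto simp: non_edges_def)

lemma EN: "x \<in> U \<Longrightarrow> y \<in> V \<Longrightarrow> (x, y) \<notin> N \<Longrightarrow> (x, y) \<in> E"
  using NI by blast

lemma uvN: "(u, v) \<in> N" using uv .

lemma u_U: "u \<in> U" and v_V: "v \<in> V" using uv by (auto simp: non_edges_def)

lemma H1:
  assumes hr: "(a, b) \<in> R" "(u, b) \<in> B" "(a, v) \<in> B"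
    and d: "(u2, v2) \<in> B2" and x: "(a, v2) \<in> N" and y: "(u2, b) \<in> N"
  shows False
proof -
  have u2: "u2 \<in> U" and v2: "v2 \<in> V" using NUV x y by auto
  from d consider "(u2, v2) \<in> Hr" | "(u2, v2) \<in> B" "(u2, v2) \<notin> Hb" using B2_iff by blast
  then show False
  proof cases
    case 1
    then have "(u, v2) \<in> B" using Hr_iff by blast
    then show False using A2[of u v2 a v] hr x uvN by blast
  next
    case 2
    have e1: "(u2, v) \<in> E" using EN[OF u2 v_V] A2[of a v u2 v2] hr 2 x by blast
    have e2: "(u, v2) \<in> E" using EN[OF u_U v2] A2[of u b u2 v2] hr 2 y by blast
    have r1: "(u2, v) \<in> R"
      using CF[of u2 v u b] e1 hr BE y uvN A2[of u2 v u b] by blast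
    have r2: "(u, v2) \<in> R"
      using CF[of u v2 a v] e2 hr BE x uvN A2[of u v2 a v] by blast
    show False using 2 r1 r2 Hb_iff by blast
  qed
qed

lemma H3:
  assumes hr: "(a, b) \<in> R" "(u, b) \<in> B" "(a, v) \<in> B"
    and d: "(u2, v2) \<in> B2" and x: "(a, v2) \<in> N" and y: "(u2, b) \<in> R2"
  shows False
proof -
  have v2: "v2 \<in> V" using NUV x by auto
  have yR: "(u2, b) \<in> R" "(u2, b) \<notin> Hr"
    using y R2_iff Hb_iff hr disj by blast+
  have u2: "u2 \<in> U" using yR RE EU by blast
  have nB: "(u2, v) \<notin> B" using yR hr Hr_iff by blast
  have dB: "(u2, v2) \<in> B" "(u2, v2) \<notin> Hb"
  proof -
    have "(u2, v2) \<notin> Hr"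
    proof
      assume "(u2, v2) \<in> Hr"
      then have "(u, v2) \<in> B" using Hr_iff by blast
      then show False using A2[of u v2 a v] hr x uvN by blast
    qed
    then show "(u2, v2) \<in> B" "(u2, v2) \<notin> Hb" using d B2_iff by blast+
  qed
  have e1: "(u2, v) \<in> E" using EN[OF u2 v_V] A2[of a v u2 v2] hr dB x by blast
  obtain xx yy where w: "(xx, yy) \<in> E" "(u2, yy) \<in> N" "(xx, b) \<in> N"
    using W[of u2 b] yR by blast
  have wB: "(xx, yy) \<in> B"
    using CF[of xx yy u2 b] w yR RE A1[of u2 b xx yy] by blast
  have xx: "xx \<in> U" and yy: "yy \<in> V" using w EU EV by auto
  have e3: "(u, yy) \<in> E" using EN[OF u_U yy] A2[of u b xx yy] hr wB w by blast
  have r1: "(u2, v) \<in> R" using CF[of u2 v u yy] e1 e3 w uvN nB by blast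
  have b3: "(u, yy) \<in> B" using CF[of u yy u2 v] e1 e3 w uvN A1[of u yy u2 v] r1 by blast
  have e2: "(u, v2) \<in> E" using EN[OF u_U v2] A2[of u yy u2 v2] b3 dB w by blast
  have "(u, v2) \<in> R \<or> (u, v2) \<in> B" using CF[of u v2 a v] e2 hr BE x uvN by blast
  moreover have "(u, v2) \<notin> B" using A2[of u v2 a v] hr x uvN by blast
  ultimately show False using r1 dB Hb_iff by blast
qed

lemma H4:
  assumes hr: "(a, b) \<in> R" "(u, b) \<in> B" "(a, v) \<in> B"
    and c: "(p, q) \<in> B2" and x: "(p, b) \<in> N" and y: "(a, q) \<in> R2"
  shows False
proof -
  have p: "p \<in> U" using NUV x by auto
  have yR: "(a, q) \<in> R" "(a, q) \<notin> Hr"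
    using y R2_iff Hb_iff hr disj by blast+
  have q: "q \<in> V" using yR RE EV by blast
  have nB: "(u, q) \<notin> B" using yR hr Hr_iff by blast
  have cB: "(p, q) \<in> B" "(p, q) \<notin> Hb"
  proof -
    have "(p, q) \<notin> Hr"
    proof
      assume "(p, q) \<in> Hr"
      then have "(u, q) \<in> B" using Hr_iff by blast
      then show False using nB by blast
    qed
    then show "(p, q) \<in> B" "(p, q) \<notin> Hb" using c B2_iff by blast+
  qed
  have e1: "(u, q) \<in> E" using EN[OF u_U q] A2[of u b p q] hr cB x by blast
  obtain xx yy where w: "(xx, yy) \<in> E" "(a, yy) \<in> N" "(xx, q) \<in> N"
    using W[of a q] yR by blast
  have wB: "(xx, yy) \<in> B"
    using CF[of xx yy a q] w yR RE A1[of a q xx yy] by blast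
  have xx: "xx \<in> U" and yy: "yy \<in> V" using w EU EV by auto
  have e3: "(xx, v) \<in> E" using EN[OF xx v_V] A2[of a v xx yy] hr wB w by blast
  have r1: "(u, q) \<in> R" using CF[of u q xx v] e1 e3 w uvN nB by blast
  have b3: "(xx, v) \<in> B" using CF[of xx v u q] e1 e3 w uvN A1[of xx v u q] r1 by blast
  have e2: "(p, v) \<in> E" using EN[OF p v_V] A2[of p q xx v] b3 cB w by blast
  have "(p, v) \<in> R \<or> (p, v) \<in> B" using CF[of p v u b] e2 hr BE x uvN by blast
  moreover have "(p, v) \<notin> B" using A2[of p v u b] hr x uvN by blast
  ultimately show False using r1 cB Hb_iff by blast
qed

lemma H5:
  assumes hr: "(a, b) \<in> R" "(u, b) \<in> B" "(a, v) \<in> B"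
    and c: "(p, b) \<in> R2" and d: "(a, q) \<in> R2" and x: "(p, q) \<in> N"
  shows False
proof -
  have p: "p \<in> U" and q: "q \<in> V" using NUV x by auto
  have c1: "(p, b) \<in> R" "(p, b) \<notin> Hr" using c R2_iff Hb_iff hr disj by blast+
  have d1: "(a, q) \<in> R" "(a, q) \<notin> Hr" using d R2_iff Hb_iff hr disj by blast+
  have n1: "(p, v) \<notin> B" using c1 hr Hr_iff by blast
  have n2: "(u, q) \<notin> B" using d1 hr Hr_iff by blast
  obtain xx yy where w: "(xx, yy) \<in> E" "(a, yy) \<in> N" "(xx, b) \<in> N"
    using W[of a b] hr by blast
  have wB: "(xx, yy) \<in> B"
    using CF[of xx yy a b] w hr RE A1[of a b xx yy] by blast
  have xx: "xx \<in> U" and yy: "yy \<in> V" using w EU EV by auto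
  have e1: "(u, yy) \<in> E" using EN[OF u_U yy] A2[of u b xx yy] hr wB w by blast
  have e2: "(xx, v) \<in> E" using EN[OF xx v_V] A2[of a v xx yy] hr wB w by blast
  have r1: "(xx, v) \<in> R" using CF[of xx v u b] e2 hr BE w uvN A2[of xx v u b] by blast
  have r2: "(u, yy) \<in> R" using CF[of u yy a v] e1 hr BE w uvN A2[of u yy a v] by blast
  have e3: "(p, v) \<in> E" using EN[OF p v_V] A1[of xx v p b] r1 c1 w by blast
  have e4: "(u, q) \<in> E" using EN[OF u_U q] A1[of u yy a q] r2 d1 w by blast
  have "(u, q) \<in> R" using CF[of u q p v] e3 e4 x uvN n2 by blast
  moreover have "(p, v) \<in> R" using CF[of p v u q] e3 e4 x uvN n1 by blast
  ultimately show False using A1[of u q p v] x uvN by blast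
qed

lemma K1:
  assumes hb: "(a, b) \<in> B" "(u, b) \<in> R" "(a, v) \<in> R"
    and d: "(u2, v2) \<in> R2" and x: "(a, v2) \<in> N" and y: "(u2, b) \<in> N"
  shows False
proof -
  have u2: "u2 \<in> U" and v2: "v2 \<in> V" using NUV x y by auto
  from d consider "(u2, v2) \<in> Hb" | "(u2, v2) \<in> R" "(u2, v2) \<notin> Hr" using R2_iff by blast
  then show False
  proof cases
    case 1
    then have "(u, v2) \<in> R" using Hb_iff by blast
    then show False using A1[of u v2 a v] hb x uvN by blast
  next
    case 2
    have e1: "(u2, v) \<in> E" using EN[OF u2 v_V] A1[of a v u2 v2] hb 2 x by blast
    have e2: "(u, v2) \<in> E" using EN[OF u_U v2] A1[of u b u2 v2] hb 2 y by blast
    have r1: "(u2, v) \<in> B"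
      using CF[of u2 v u b] e1 hb RE y uvN A1[of u2 v u b] by blast
    have r2: "(u, v2) \<in> B"
      using CF[of u v2 a v] e2 hb RE x uvN A1[of u v2 a v] by blast
    show False using 2 r1 r2 Hr_iff by blast
  qed
qed

lemma K3:
  assumes hb: "(a, b) \<in> B" "(u, b) \<in> R" "(a, v) \<in> R"
    and d: "(u2, v2) \<in> R2" and x: "(a, v2) \<in> N" and y: "(u2, b) \<in> B2"
  shows False
proof -
  have v2: "v2 \<in> V" using NUV x by auto
  have yB: "(u2, b) \<in> B" "(u2, b) \<notin> Hb"
    using y B2_iff Hr_iff hb disj by blast+
  have u2: "u2 \<in> U" using yB BE EU by blast
  have nR: "(u2, v) \<notin> R" using yB hb Hb_iff by blast
  have dR: "(u2, v2) \<in> R" "(u2, v2) \<notin> Hr"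
  proof -
    have "(u2, v2) \<notin> Hb"
    proof
      assume "(u2, v2) \<in> Hb"
      then have "(u, v2) \<in> R" using Hb_iff by blast
      then show False using A1[of u v2 a v] hb x uvN by blast
    qed
    then show "(u2, v2) \<in> R" "(u2, v2) \<notin> Hr" using d R2_iff by blast+
  qed
  have e1: "(u2, v) \<in> E" using EN[OF u2 v_V] A1[of a v u2 v2] hb dR x by blast
  obtain xx yy where w: "(xx, yy) \<in> E" "(u2, yy) \<in> N" "(xx, b) \<in> N"
    using W[of u2 b] yB by blast
  have wR: "(xx, yy) \<in> R"
    using CF[of xx yy u2 b] w yB BE A2[of u2 b xx yy] by blast
  have xx: "xx \<in> U" and yy: "yy \<in> V" using w EU EV by auto
  have e3: "(u, yy) \<in> E" using EN[OF u_U yy] A1[of u b xx yy] hb wR w by blast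
  have r1: "(u2, v) \<in> B" using CF[of u2 v u yy] e1 e3 w uvN nR by blast
  have b3: "(u, yy) \<in> R" using CF[of u yy u2 v] e1 e3 w uvN A2[of u yy u2 v] r1 by blast
  have e2: "(u, v2) \<in> E" using EN[OF u_U v2] A1[of u yy u2 v2] b3 dR w by blast
  have "(u, v2) \<in> R \<or> (u, v2) \<in> B" using CF[of u v2 a v] e2 hb RE x uvN by blast
  moreover have "(u, v2) \<notin> R" using A1[of u v2 a v] hb x uvN by blast
  ultimately show False using r1 dR Hr_iff by blast
qed

lemma K4:
  assumes hb: "(a, b) \<in> B" "(u, b) \<in> R" "(a, v) \<in> R"
    and c: "(p, q) \<in> R2" and x: "(p, b) \<in> N" and y: "(a, q) \<in> B2"
  shows False
proof -
  have p: "p \<in> U" using NUV x by auto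
  have yB: "(a, q) \<in> B" "(a, q) \<notin> Hb"
    using y B2_iff Hr_iff hb disj by blast+
  have q: "q \<in> V" using yB BE EV by blast
  have nR: "(u, q) \<notin> R" using yB hb Hb_iff by blast
  have cR: "(p, q) \<in> R" "(p, q) \<notin> Hr"
  proof -
    have "(p, q) \<notin> Hb"
    proof
      assume "(p, q) \<in> Hb"
      then have "(u, q) \<in> R" using Hb_iff by blast
      then show False using nR by blast
    qed
    then show "(p, q) \<in> R" "(p, q) \<notin> Hr" using c R2_iff by blast+
  qed
  have e1: "(u, q) \<in> E" using EN[OF u_U q] A1[of u b p q] hb cR x by blast
  obtain xx yy where w: "(xx, yy) \<in> E" "(a, yy) \<in> N" "(xx, q) \<in> N"
    using W[of a q] yB by blast
  have wR: "(xx, yy) \<in> R"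
    using CF[of xx yy a q] w yB BE A2[of a q xx yy] by blast
  have xx: "xx \<in> U" and yy: "yy \<in> V" using w EU EV by auto
  have e3: "(xx, v) \<in> E" using EN[OF xx v_V] A1[of a v xx yy] hb wR w by blast
  have r1: "(u, q) \<in> B" using CF[of u q xx v] e1 e3 w uvN nR by blast
  have b3: "(xx, v) \<in> R" using CF[of xx v u q] e1 e3 w uvN A2[of xx v u q] r1 by blast
  have e2: "(p, v) \<in> E" using EN[OF p v_V] A1[of p q xx v] b3 cR w by blast
  have "(p, v) \<in> R \<or> (p, v) \<in> B" using CF[of p v u b] e2 hb RE x uvN by blast
  moreover have "(p, v) \<notin> R" using A1[of p v u b] hb x uvN by blast
  ultimately show False using r1 cR Hr_iff by blast
qed

lemma K5:
  assumes hb: "(a, b) \<in> B" "(u, b) \<in> R" "(a, v) \<in> R"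
    and d: "(u2, v2) \<in> R2" and x: "(a, v2) \<in> N" and y: "(u2, b) \<in> F"
  shows False
proof -
  have v2: "v2 \<in> V" using NUV x by auto
  have u2: "u2 \<in> U" using y FE EU by blast
  have dR: "(u2, v2) \<in> R" "(u2, v2) \<notin> Hr"
  proof -
    have "(u2, v2) \<notin> Hb"
    proof
      assume "(u2, v2) \<in> Hb"
      then have "(u, v2) \<in> R" using Hb_iff by blast
      then show False using A1[of u v2 a v] hb x uvN by blast
    qed
    then show "(u2, v2) \<in> R" "(u2, v2) \<notin> Hr" using d R2_iff by blast+
  qed
  have e1: "(u2, v) \<in> E" using EN[OF u2 v_V] A1[of a v u2 v2] hb dR x by blast
  have e2: "(u, v2) \<in> E" using EN[OF u_U v2] CC[of u b u2 v2] hb dR y by blast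
  have b2: "(u, v2) \<in> B" using CF[of u v2 a v] e2 hb RE x uvN A1[of u v2 a v] by blast
  have nB: "(u2, v) \<notin> B" using b2 dR Hr_iff by blast
  obtain xx yy where w: "(xx, yy) \<in> E" "(u2, yy) \<in> N" "(xx, v2) \<in> N"
    using W[of u2 v2] dR by blast
  have wB: "(xx, yy) \<in> B"
    using CF[of xx yy u2 v2] w dR RE A1[of u2 v2 xx yy] by blast
  have yy: "yy \<in> V" using w EV by auto
  have e3: "(u, yy) \<in> E" using EN[OF u_U yy] A2[of u v2 xx yy] b2 wB w by blast
  have r1: "(u2, v) \<in> R" using CF[of u2 v u yy] e1 e3 w uvN nB by blast
  show False using CC[of u b u2 v] hb r1 uvN y by blast
qed

lemma K6:
  assumes hb: "(a, b) \<in> B" "(u, b) \<in> R" "(a, v) \<in> R"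
    and c: "(p, q) \<in> R2" and x: "(p, b) \<in> N" and y: "(a, q) \<in> F"
  shows False
proof -
  have p: "p \<in> U" using NUV x by auto
  have q: "q \<in> V" using y FE EV by blast
  have nR: "(u, q) \<notin> R" using CC[of u q a v] hb uvN y by blast
  have cR: "(p, q) \<in> R" "(p, q) \<notin> Hr"
  proof -
    have "(p, q) \<notin> Hb"
    proof
      assume "(p, q) \<in> Hb"
      then have "(u, q) \<in> R" using Hb_iff by blast
      then show False using nR by blast
    qed
    then show "(p, q) \<in> R" "(p, q) \<notin> Hr" using c R2_iff by blast+
  qed
  have e1: "(p, v) \<in> E" using EN[OF p v_V] CC[of p q a v] cR hb y by blast
  have b1: "(p, v) \<in> B" using CF[of p v u b] e1 hb RE x uvN A1[of p v u b] by blast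
  have nB: "(u, q) \<notin> B" using b1 cR Hr_iff by blast
  have e2: "(u, q) \<in> E" using EN[OF u_U q] A1[of p q u b] cR hb x by blast
  obtain xx yy where w: "(xx, yy) \<in> E" "(p, yy) \<in> N" "(xx, q) \<in> N"
    using W[of p q] cR by blast
  have wB: "(xx, yy) \<in> B"
    using CF[of xx yy p q] w cR RE A1[of p q xx yy] by blast
  have xx: "xx \<in> U" using w EU by auto
  have e3: "(xx, v) \<notin> E" using CF[of u q xx v] e2 w uvN nR nB by blast
  show False using A2[of p v xx yy] b1 wB w NI[OF xx v_V e3] by blast
qed

lemma K7:
  assumes hb: "(a, b) \<in> B" "(u, b) \<in> R" "(a, v) \<in> R"
    and c: "(p, b) \<in> B2" and d: "(a, q) \<in> B2" and x: "(p, q) \<in> N"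
  shows False
proof -
  have p: "p \<in> U" and q: "q \<in> V" using NUV x by auto
  have c1: "(p, b) \<in> B" "(p, b) \<notin> Hb" using c B2_iff Hr_iff hb disj by blast+
  have d1: "(a, q) \<in> B" "(a, q) \<notin> Hb" using d B2_iff Hr_iff hb disj by blast+
  have n1: "(p, v) \<notin> R" using c1 hb Hb_iff by blast
  have n2: "(u, q) \<notin> R" using d1 hb Hb_iff by blast
  obtain xx yy where w: "(xx, yy) \<in> E" "(a, yy) \<in> N" "(xx, b) \<in> N"
    using W[of a b] hb by blast
  have wR: "(xx, yy) \<in> R"
    using CF[of xx yy a b] w hb BE A2[of a b xx yy] by blast
  have xx: "xx \<in> U" and yy: "yy \<in> V" using w EU EV by auto
  have e1: "(u, yy) \<in> E" using EN[OF u_U yy] A1[of u b xx yy] hb wR w by blast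
  have e2: "(xx, v) \<in> E" using EN[OF xx v_V] A1[of a v xx yy] hb wR w by blast
  have r1: "(xx, v) \<in> B" using CF[of xx v u b] e2 hb RE w uvN A1[of xx v u b] by blast
  have r2: "(u, yy) \<in> B" using CF[of u yy a v] e1 hb RE w uvN A1[of u yy a v] by blast
  have e3: "(p, v) \<in> E" using EN[OF p v_V] A2[of xx v p b] r1 c1 w by blast
  have e4: "(u, q) \<in> E" using EN[OF u_U q] A2[of u yy a q] r2 d1 w by blast
  have "(u, q) \<in> B" using CF[of u q p v] e3 e4 x uvN n2 by blast
  moreover have "(p, v) \<in> B" using CF[of p v u q] e3 e4 x uvN n1 by blast
  ultimately show False using A2[of u q p v] x uvN by blast
qed


lemma main:
  assumes eH: "(a, b) \<in> Hr \<union> Hb"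
    and fc: "forbidden_config U V E F R2 B2 u1 u2 v1 v2"
    and ed: "(a, b) \<in> config_edges E u1 u2 v1 v2"
  shows False
proof -
  have ed': "(a, b) = (u1, v1) \<or> (a, b) = (u2, v2) \<or> ((a, b) = (u2, v1) \<and> (a, b) \<in> E)"
    using ed by (auto simp: config_edges_def)
  have fc': "((u1, v1) \<in> R2 \<and> (u2, v2) \<in> R2 \<and> (u1, v2) \<in> N \<and> (u2, v1) \<in> N)
     \<or> ((u1, v1) \<in> B2 \<and> (u2, v2) \<in> B2 \<and> (u1, v2) \<in> N \<and> (u2, v1) \<in> N)
     \<or> ((u1, v1) \<in> R2 \<and> (u2, v2) \<in> R2 \<and> (u1, v2) \<in> N \<and> (u2, v1) \<in> B2)
     \<or> ((u1, v1) \<in> B2 \<and> (u2, v2) \<in> B2 \<and> (u1, v2) \<in> N \<and> (u2, v1) \<in> R2)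
     \<or> ((u1, v1) \<in> R2 \<and> (u2, v2) \<in> R2 \<and> (u1, v2) \<in> N \<and> (u2, v1) \<in> F)"
    using fc unfolding forbidden_config_def config_A1_def config_A2_def config_B1_def
      config_B2_def config_C_def by blast
  from eH show False
  proof
    assume h: "(a, b) \<in> Hr"
    then have hr: "(a, b) \<in> R" "(u, b) \<in> B" "(a, v) \<in> B" using Hr_iff by auto
    have nR2: "(a, b) \<notin> R2" using h hr R2_iff Hb_iff disj by blast
    have yN: "(a, b) \<notin> N" if "(a, b) \<in> E" using that Nd by blast
    show False
      using fc' ed' nR2 yN
    proof (elim disjE conjE)
    qed (auto intro: H1[OF hr] H3[OF hr] H4[OF hr] H5[OF hr] H1[of u2 v2 u1 v1] dest: FR)
  next
    assume h: "(a, b) \<in> Hb"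
    then have hb: "(a, b) \<in> B" "(u, b) \<in> R" "(a, v) \<in> R" using Hb_iff by auto
    have nB2: "(a, b) \<notin> B2" using h hb B2_iff Hr_iff disj by blast
    have yN: "(a, b) \<notin> N" if "(a, b) \<in> E" using that Nd by blast
    have nF: "(a, b) \<notin> F" using CC[of u b a v] hb uvN by blast
    show False
      using fc' ed' nB2 yN nF
    proof (elim disjE conjE)
    qed (auto intro: K1[OF hb] K3[OF hb] K4[OF hb] K5[OF hb] K6[OF hb] K7[OF hb] K1[of u2 v2 u1 v1])
  qed
qed

end

theorem lemma2:
  fixes U V :: "'a set" and E F Er Eb :: "('a \<times> 'a) set" and u v :: 'a
  assumes "bipartite_graph U V E"
    and "F \<subseteq> E"
    and "bipartition E F Er Eb"
    and "AC_free U V E F Er Eb"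
    and "u \<in> U" and "v \<in> V" and "(u, v) \<in> non_edges U V E"
  defines "Hr \<equiv> {(u', v'). (u', v') \<in> Er \<and> (u, v') \<in> Eb \<and> (u', v) \<in> Eb}"
    and "Hb \<equiv> {(u', v'). (u', v') \<in> Eb \<and> (u, v') \<in> Er \<and> (u', v) \<in> Er}"
  defines "H \<equiv> Hr \<union> Hb"
    and "Er' \<equiv> (Er - Hr) \<union> Hb"
    and "Eb' \<equiv> (Eb - Hb) \<union> Hr"
  shows "\<forall>e \<in> H. \<forall>u1 u2 v1 v2.
           forbidden_config U V E F Er' Eb' u1 u2 v1 v2 \<longrightarrow> e \<notin> config_edges E u1 u2 v1 v2"
proof -
  interpret L2 U V E F Er Eb Hr Hb Er' Eb' u v
    using assms by (unfold_locales) (auto simp: bipartite_graph_def)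
  show ?thesis unfolding H_def using main by fast
qed

end
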